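(* Let $\lambda_0\in\mathbb D\setminus\{0\}$ and $y^0=(y_1^0,y_2^0,q^0)\in\widetilde{\mathbb G}_3$ with $y^0_1y^0_2\ne9q^0$, $|y^0_2|\le|y^0_1|$ and $\|\Phi_1(\cdot,y^0)\|_{H^\infty}<|\lambda_0|$. For $\nu>0$ let $Z_\nu=\begin{bmatrix}y^0_1/(3\lambda_0)&\nu w\\ \nu^{-1}w&y^0_2/3\end{bmatrix}$, where $w^2=\frac{y^0_1y^0_2-9q^0}{9\lambda_0}$. Let $\theta_1,\theta_2$ be the roots of $z+1/z=\frac{|\lambda_0|}{|y^0_1y^0_2-9q^0|}\left(9-\frac{|y^0_1|^2}{|\lambda_0|^2}-|y^0_2|^2+\frac{9|q^0|^2}{|\lambda_0|^2}\right)$. Then for every $\nu>0$ with $\theta_1<\nu^2<\theta_2$ we have $\|Z_\nu\|<1$ and the matrix $\mathcal K_{Z_\nu}(|\lambda_0|)$ is not positive definite.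
   Context: $\mathbb D$ open unit disc, $\|\cdot\|$ operator norm. $\widetilde{\mathbb G}_3=\{(\beta_1+\bar\beta_2q,\beta_2+\bar\beta_1q,q): q\in\mathbb D,\ |\beta_1|+|\beta_2|<3\}$. For $y=(y_1,y_2,q)$, $\Phi_1(z,y)=\frac{3qz-y_1}{y_2z-3}$ if $y_2z\ne3$ and $y_1y_2\ne9q$, $\Phi_1(z,y)=y_1/3$ if $y_1y_2=9q$; $\|\Phi_1(\cdot,y)\|_{H^\infty}=\sup_{z\in\mathbb D}|\Phi_1(z,y)|$. For a $2\times2$ matrix $Z$ with $\|Z\|<1$ and $0\le\rho<1$, $\mathcal K_Z(\rho)=\begin{bmatrix}[(1-\rho^2Z^*Z)(1-Z^*Z)^{-1}]_{11}&[(1-\rho^2)(1-ZZ^* )^{-1}Z]_{21}\\ [(1-\rho^2)Z^*(1-ZZ^* )^{-1}]_{12}&[(ZZ^*-\rho^2)(1-ZZ^* )^{-1}]_{22}\end{bmatrix}$. *)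

theory Defs
  imports "HOL-Analysis.Analysis"
begin

type_synonym cmat2 = "complex^2^2"

definition adj :: "cmat2 \<Rightarrow> cmat2" where
  "adj Z = (\<chi> i j. cnj (Z $ j $ i))"

definition opnorm :: "cmat2 \<Rightarrow> real" where
  "opnorm Z = onorm (\<lambda>x. Z *v x)"

definition G3t :: "(complex \<times> complex \<times> complex) set" where
  "G3t = {(b1 + cnj b2 * q, b2 + cnj b1 * q, q) | b1 b2 q.
            cmod q < 1 \<and> cmod b1 + cmod b2 < 3}"

definition Phi1 :: "complex \<Rightarrow> complex \<times> complex \<times> complex \<Rightarrow> complex" where
  "Phi1 z y = (case y of (y1, y2, q) \<Rightarrow>
      if y1 * y2 = 9 * q then y1 / 3 else (3 * q * z - y1) / (y2 * z - 3))"

definition Phi1_Hinf :: "complex \<times> complex \<times> complex \<Rightarrow> real" where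
  "Phi1_Hinf y = (SUP z \<in> ball 0 1. cmod (Phi1 z y))"

definition KZ :: "cmat2 \<Rightarrow> real \<Rightarrow> cmat2" where
  "KZ Z r = (let I = (mat 1 :: cmat2);
                 A = (I - (r^2) *\<^sub>R (adj Z ** Z)) ** matrix_inv (I - adj Z ** Z);
                 B = ((1 - r^2) *\<^sub>R matrix_inv (I - Z ** adj Z)) ** Z;
                 C = ((1 - r^2) *\<^sub>R adj Z) ** matrix_inv (I - Z ** adj Z);
                 D = (Z ** adj Z - (r^2) *\<^sub>R I) ** matrix_inv (I - Z ** adj Z)
             in (\<chi> i j. if i = 1 \<and> j = 1 then A $ 1 $ 1
                        else if i = 1 \<and> j = 2 then B $ 2 $ 1
                        else if i = 2 \<and> j = 1 then C $ 1 $ 2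
                        else D $ 2 $ 2))"

definition pos_def :: "cmat2 \<Rightarrow> bool" where
  "pos_def K \<longleftrightarrow> (\<forall>v :: complex^2. v \<noteq> 0 \<longrightarrow>
     (let s = (\<Sum>i\<in>UNIV. \<Sum>j\<in>UNIV. cnj (v $ i) * K $ i $ j * v $ j)
      in Im s = 0 \<and> Re s > 0))"

end

theory Submission
  imports Defs
begin

lemma phi_bound:
  fixes y1 y2 q :: complex
  assumes y2: "cmod y2 < 3" and qq: "cmod q < 1" and le: "cmod y2 \<le> cmod y1"
    and ne: "y1 * y2 \<noteq> 9 * q"
  shows "cmod q \<le> Phi1_Hinf (y1, y2, q)"
proof -
  define M where "M = Phi1_Hinf (y1, y2, q)"
  have den: "cmod (y2 * z - 3) \<ge> 3 - cmod y2" if "cmod z \<le> 1" for z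
  proof -
    have "cmod (y2 * z) \<le> cmod y2" using that by (simp add: norm_mult mult_left_le)
    moreover have "cmod (3::complex) - cmod (y2 * z) \<le> cmod (y2 * z - 3)"
      by (metis norm_minus_commute norm_triangle_ineq2)
    ultimately show ?thesis by simp
  qed
  have ph: "Phi1 z (y1, y2, q) = (3 * q * z - y1) / (y2 * z - 3)" for z
    using ne by (simp add: Phi1_def)
  have bdd: "bdd_above ((\<lambda>z. cmod (Phi1 z (y1, y2, q))) ` ball 0 1)"
  proof (rule bdd_aboveI2)
    fix z :: complex assume "z \<in> ball 0 1"
    then have z: "cmod z \<le> 1" by simp
    have n: "cmod (3 * q * z - y1) \<le> 3 + cmod y1"
    proof -
      have "cmod (3 * q * z) \<le> 3" using z qq
        by (simp add: norm_mult) (smt (verit) mult_le_one norm_ge_zero)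
      then show ?thesis by (smt (verit) norm_triangle_ineq4)
    qed
    have d: "3 - cmod y2 \<le> cmod (y2 * z - 3)" using den[OF z] .
    have "cmod (Phi1 z (y1, y2, q)) = cmod (3 * q * z - y1) / cmod (y2 * z - 3)"
      by (simp add: ph norm_divide)
    also have "\<dots> \<le> (3 + cmod y1) / (3 - cmod y2)"
      using n d y2 by (intro frac_le) auto
    finally show "cmod (Phi1 z (y1, y2, q)) \<le> (3 + cmod y1) / (3 - cmod y2)" .
  qed
  have inball: "cmod (3 * q * z - y1) - M * cmod (y2 * z - 3) \<le> 0" if "z \<in> ball 0 1" for z
  proof -
    have "cmod (Phi1 z (y1, y2, q)) \<le> M"
      unfolding M_def Phi1_Hinf_def using bdd that by (rule cSUP_upper2) simp
    moreover have "cmod (y2 * z - 3) > 0" using den[of z] that y2 by force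
    ultimately show ?thesis by (simp add: ph norm_divide divide_le_eq)
  qed
  have cl: "cmod (3 * q * u - y1) - M * cmod (y2 * u - 3) \<le> 0" if "cmod u = 1" for u
  proof (rule continuous_le_on_closure[where S="ball 0 1" and f="\<lambda>z. cmod (3 * q * z - y1) - M * cmod (y2 * z - 3)"])
    show "continuous_on (closure (ball 0 1)) (\<lambda>z. cmod (3 * q * z - y1) - M * cmod (y2 * z - 3))"
      by (intro continuous_intros)
    show "u \<in> closure (ball 0 1)" using that by simp
  qed (rule inball)
  define B where "B = q * cnj y1 - (cmod q)^2 * y2"
  obtain u :: complex where u: "u = 1 \<or> u = -1" "Re (u * B) \<le> 0"
    by (metis add.inverse_inverse mult_minus_left neg_0_le_iff_le one_complex.simps(1) uminus_complex.sel(1) linear)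
  have id: "(cmod (3 * q * u - y1))^2 - (cmod q)^2 * (cmod (y2 * u - 3))^2
        = (cmod y1)^2 - (cmod q)^2 * (cmod y2)^2 - 6 * Re (u * B)"
    using u(1) unfolding B_def cmod_power2
    by (auto simp: algebra_simps power2_eq_square)
  have "(cmod q)^2 * (cmod y2)^2 \<le> (cmod y1)^2"
  proof -
    have "(cmod q)^2 \<le> 1" using qq by (simp add: power_le_one)
    moreover have "(cmod y2)^2 \<le> (cmod y1)^2" using le by (simp add: power_mono)
    ultimately show ?thesis
      by (metis mult_left_le_one_le order_trans zero_le_power2 norm_ge_zero)
  qed
  with id u(2) have "(cmod q * cmod (y2 * u - 3))^2 \<le> (cmod (3 * q * u - y1))^2"
    by (simp add: power_mult_distrib)
  then have "cmod q * cmod (y2 * u - 3) \<le> cmod (3 * q * u - y1)"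
    by (rule power2_le_imp_le) simp
  moreover have "cmod u = 1" using u(1) by auto
  moreover have "cmod (y2 * u - 3) > 0" using den[of u] \<open>cmod u = 1\<close> y2 by force
  ultimately have "cmod q * cmod (y2 * u - 3) \<le> M * cmod (y2 * u - 3)" using cl[of u] by linarith
  then show ?thesis unfolding M_def using \<open>cmod (y2 * u - 3) > 0\<close> by (simp add: M_def)
qed


definition mk :: "complex \<Rightarrow> complex \<Rightarrow> complex \<Rightarrow> complex \<Rightarrow> cmat2" where
  "mk a b c d = (\<chi> i j. if i = 1 \<and> j = 1 then a else if i = 1 \<and> j = 2 then b
                        else if i = 2 \<and> j = 1 then c else d)"

lemma mk_nth[simp]: "mk a b c d $ 1 $ 1 = a" "mk a b c d $ 1 $ 2 = b"
  "mk a b c d $ 2 $ 1 = c" "mk a b c d $ 2 $ 2 = d"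
  by (simp_all add: mk_def)

lemma norm_vec2_sq: "(norm (x :: complex^2))^2 = (cmod (x$1))^2 + (cmod (x$2))^2"
  unfolding norm_vec_def L2_set_def by (simp add: sum_2)

lemma mk_mult_vec: "mk a b c d *v x = (\<chi> i. if i = 1 then a * x$1 + b * x$2 else c * x$1 + d * x$2)"
  by (simp add: matrix_vector_mult_def sum_2 vec_eq_iff forall_2)

lemma expand2:
  fixes a b x1 x2 :: complex
  shows "(cmod (a * x1 + b * x2))^2 = (cmod a)^2 * (cmod x1)^2 + (cmod b)^2 * (cmod x2)^2
          + 2 * Re (cnj x1 * x2 * (cnj a * b))"
  unfolding cmod_power2 by simp algebra

lemma lagrange:
  fixes a b c d :: complex
  shows "(cmod (cnj a * b + cnj c * d))^2 = ((cmod a)^2 + (cmod c)^2) * ((cmod b)^2 + (cmod d)^2)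
           - (cmod (a * d - b * c))^2"
  unfolding cmod_power2 by simp algebra

lemma det_le:
  fixes a b c d :: complex
  shows "4 * (cmod (a * d - b * c))^2 \<le> ((cmod a)^2 + (cmod b)^2 + (cmod c)^2 + (cmod d)^2)^2"
proof -
  have "cmod (a * d - b * c) \<le> cmod a * cmod d + cmod b * cmod c"
    by (metis norm_mult norm_triangle_ineq4)
  moreover have "2 * (cmod a * cmod d + cmod b * cmod c) \<le> (cmod a)^2 + (cmod b)^2 + (cmod c)^2 + (cmod d)^2"
  proof -
    have "0 \<le> (cmod a - cmod d)^2 + (cmod b - cmod c)^2" by simp
    then show ?thesis by (simp add: power2_diff algebra_simps)
  qed
  ultimately have "2 * cmod (a * d - b * c) \<le> (cmod a)^2 + (cmod b)^2 + (cmod c)^2 + (cmod d)^2"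
    by (meson mult_left_mono order_trans zero_le_numeral)
  then have "(2 * cmod (a * d - b * c))^2 \<le> ((cmod a)^2 + (cmod b)^2 + (cmod c)^2 + (cmod d)^2)^2"
    by (rule power_mono) simp
  then show ?thesis by (simp add: power_mult_distrib)
qed

lemma quad_nonneg:
  fixes p s R X Y :: real
  assumes "p + s \<ge> 0" "p * s \<ge> R^2" "R \<ge> 0" "X \<ge> 0" "Y \<ge> 0"
  shows "p * X^2 + s * Y^2 - 2 * R * X * Y \<ge> 0"
proof -
  have ps0: "p * s \<ge> 0" using assms(2) zero_le_power2[of R] by linarith
  have ps: "p \<ge> 0" "s \<ge> 0"
  proof -
    show "p \<ge> 0"
    proof (rule ccontr)
      assume "\<not> p \<ge> 0"
      then have "p < 0" "s > 0" using assms(1) by auto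
      then have "p * s < 0" by (simp add: mult_neg_pos)
      then show False using ps0 by simp
    qed
    show "s \<ge> 0"
    proof (rule ccontr)
      assume "\<not> s \<ge> 0"
      then have "s < 0" "p > 0" using assms(1) by auto
      then have "p * s < 0" by (simp add: mult_pos_neg)
      then show False using ps0 by simp
    qed
  qed
  have A: "p * X^2 + s * Y^2 \<ge> 0" using ps by simp
  have "(p * X^2 + s * Y^2)^2 - (2 * R * X * Y)^2 \<ge> (p * X^2 - s * Y^2)^2 + 4 * (p * s - R^2) * X^2 * Y^2"
    by (simp add: power2_eq_square algebra_simps)
  moreover have "(p * X^2 - s * Y^2)^2 + 4 * (p * s - R^2) * X^2 * Y^2 \<ge> 0"
    using assms(2) by (simp add: mult_nonneg_nonneg)
  ultimately have "(2 * R * X * Y)^2 \<le> (p * X^2 + s * Y^2)^2" by linarith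
  then have "2 * R * X * Y \<le> p * X^2 + s * Y^2"
    using A by (rule power2_le_imp_le)
  then show ?thesis by linarith
qed

lemma opnorm_lt:
  fixes a b c d :: complex
  defines "T \<equiv> (cmod a)^2 + (cmod b)^2 + (cmod c)^2 + (cmod d)^2"
  defines "D \<equiv> (cmod (a * d - b * c))^2"
  assumes pos: "1 - T + D > 0" and D1: "D < 1"
  shows "opnorm (mk a b c d) < 1"
proof -
  define \<Delta> where "\<Delta> = 1 - T + D"
  have T2: "2 - T > 0" using pos D1 unfolding \<Delta>_def by linarith
  define e where "e = \<Delta> / (2 - T)"
  have e0: "e > 0" using pos T2 unfolding e_def \<Delta>_def by simp
  have TD: "T^2 \<ge> 4 * D" unfolding T_def D_def using det_le[of a d b c] by simp
  have sq: "(2 - T)^2 \<ge> 4 * \<Delta>" using TD unfolding \<Delta>_def by (simp add: power2_eq_square algebra_simps)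
  have e_le4: "4 * e \<le> 2 - T"
  proof -
    have "4 * \<Delta> \<le> (2 - T) * (2 - T)" using sq unfolding \<Delta>_def by (simp add: power2_eq_square)
    then show ?thesis unfolding e_def using T2 by (simp add: divide_le_eq mult.commute)
  qed
  have T0: "T \<ge> 0" unfolding T_def by simp
  have e_le: "2 * e \<le> 2 - T" using e_le4 e0 by linarith
  have e1: "e < 1" using e_le4 T0 by linarith
  define r where "r = cnj a * b + cnj c * d"
  define p where "p = 1 - e - ((cmod a)^2 + (cmod c)^2)"
  define s where "s = 1 - e - ((cmod b)^2 + (cmod d)^2)"
  have r2: "(cmod r)^2 = ((cmod a)^2 + (cmod c)^2) * ((cmod b)^2 + (cmod d)^2) - D"
    unfolding r_def D_def by (rule lagrange)
  have eq: "e * (2 - T) = \<Delta>" unfolding e_def using T2 by simp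
  have "p * s - (cmod r)^2 = e^2"
    unfolding p_def s_def r2
    using eq unfolding \<Delta>_def T_def by (simp add: power2_eq_square algebra_simps)
  then have ps: "p * s \<ge> (cmod r)^2" using zero_le_power2[of e] by linarith
  have pps: "p + s \<ge> 0" using e_le unfolding p_def s_def T_def by simp
  have bound: "norm (mk a b c d *v x) \<le> sqrt (1 - e) * norm x" for x :: "complex^2"
  proof -
    define x1 where "x1 = x$1"
    define x2 where "x2 = x$2"
    have "(norm (mk a b c d *v x))^2 = (cmod (a * x1 + b * x2))^2 + (cmod (c * x1 + d * x2))^2"
      unfolding norm_vec2_sq mk_mult_vec x1_def x2_def by simp
    also have "\<dots> = ((cmod a)^2 + (cmod c)^2) * (cmod x1)^2 + ((cmod b)^2 + (cmod d)^2) * (cmod x2)^2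
        + 2 * Re (cnj x1 * x2 * r)"
      unfolding expand2 r_def by (simp add: algebra_simps)
    also have "\<dots> \<le> (1 - e) * ((cmod x1)^2 + (cmod x2)^2)"
    proof -
      have "Re (cnj x1 * x2 * r) \<le> cmod x1 * cmod x2 * cmod r"
        by (metis complex_Re_le_cmod norm_mult complex_mod_cnj)
      moreover have "p * (cmod x1)^2 + s * (cmod x2)^2 - 2 * cmod r * cmod x1 * cmod x2 \<ge> 0"
        by (rule quad_nonneg[OF pps ps]) auto
      ultimately show ?thesis unfolding p_def s_def by (simp add: algebra_simps)
    qed
    also have "\<dots> = (sqrt (1 - e) * norm x)^2"
      using e1 by (simp add: power_mult_distrib norm_vec2_sq x1_def x2_def)
    finally show ?thesis
      by (rule power2_le_imp_le) (use e1 in simp)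
  qed
  have "opnorm (mk a b c d) \<le> sqrt (1 - e)"
    unfolding opnorm_def by (rule onorm_le) (rule bound)
  also have "\<dots> < 1" using e0 e1 by simp
  finally show ?thesis .
qed


lemma mk_eq_iff: "(M :: cmat2) = mk a b c d \<longleftrightarrow> M$1$1 = a \<and> M$1$2 = b \<and> M$2$1 = c \<and> M$2$2 = d"
  by (auto simp: vec_eq_iff forall_2)

lemma mk_inj[simp]: "mk a b c d = mk e f g h \<longleftrightarrow> a = e \<and> b = f \<and> c = g \<and> d = h"
  by (simp add: mk_eq_iff)

lemma mk_mult: "mk a b c d ** mk e f g h = mk (a*e + b*g) (a*f + b*h) (c*e + d*g) (c*f + d*h)"
  by (simp add: mk_eq_iff matrix_matrix_mult_def sum_2)

lemma mat1_mk: "(mat 1 :: cmat2) = mk 1 0 0 1"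
  by (simp add: mk_eq_iff mat_def)

lemma mk_diff: "mk a b c d - mk e f g h = mk (a - e) (b - f) (c - g) (d - h)"
  by (simp add: mk_eq_iff)

lemma mk_scaleR: "k *\<^sub>R mk a b c d = mk (of_real k * a) (of_real k * b) (of_real k * c) (of_real k * d)"
  by (simp add: mk_eq_iff) (simp add: scaleR_conv_of_real)

lemma adj_mk: "adj (mk a b c d) = mk (cnj a) (cnj c) (cnj b) (cnj d)"
  by (simp add: mk_eq_iff adj_def)

lemma matrix_inv_eq:
  fixes A B :: "'a::comm_ring_1^'n^'n"
  assumes "A ** B = mat 1" "B ** A = mat 1"
  shows "matrix_inv A = B"
proof -
  have "\<exists>A'. A ** A' = mat 1 \<and> A' ** A = mat 1" using assms by blast
  then have "A ** matrix_inv A = mat 1 \<and> matrix_inv A ** A = mat 1"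
    unfolding matrix_inv_def by (rule someI_ex)
  then have i: "matrix_inv A ** A = mat 1" by blast
  have "matrix_inv A = matrix_inv A ** (A ** B)" by (simp add: assms(1) matrix_mul_rid)
  also have "\<dots> = (matrix_inv A ** A) ** B" by (simp add: matrix_mul_assoc)
  also have "\<dots> = B" by (simp add: i matrix_mul_lid)
  finally show ?thesis .
qed

lemma matrix_inv_mk:
  assumes "p * t - q * r \<noteq> 0"
  shows "matrix_inv (mk p q r t) = mk (t / (p * t - q * r)) (- q / (p * t - q * r)) (- r / (p * t - q * r)) (p / (p * t - q * r))"
proof -
  define e where "e = p * t - q * r"
  have e: "e \<noteq> 0" using assms e_def by simp
  have ee: "t * p - q * r = e" "p * t - r * q = e" "t * p - r * q = e" "p * t - q * r = e"
    unfolding e_def by (simp_all add: algebra_simps)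
  have "matrix_inv (mk p q r t) = mk (t / e) (- q / e) (- r / e) (p / e)"
    apply (rule matrix_inv_eq)
    using e by (simp_all add: mk_mult mat1_mk) (simp_all add: field_simps ee)
  then show ?thesis unfolding e_def .
qed


lemma KZ_mk:
  fixes a b c d :: complex and \<rho> :: real
  defines "\<Delta> \<equiv> 1 - ((cmod a)^2 + (cmod b)^2 + (cmod c)^2 + (cmod d)^2) + (cmod (a * d - b * c))^2"
  assumes D0: "\<Delta> \<noteq> 0"
  shows "KZ (mk a b c d) \<rho> $ 1 $ 1 = of_real (\<rho>^2) + of_real (1 - \<rho>^2) * (1 - (cnj b * b + cnj d * d)) / of_real \<Delta>"
    and "KZ (mk a b c d) \<rho> $ 1 $ 2 = of_real (1 - \<rho>^2) * (c + cnj b * (a * d - b * c)) / of_real \<Delta>"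
    and "KZ (mk a b c d) \<rho> $ 2 $ 1 = of_real (1 - \<rho>^2) * (cnj c + b * cnj (a * d - b * c)) / of_real \<Delta>"
    and "KZ (mk a b c d) \<rho> $ 2 $ 2 = of_real (1 - \<rho>^2) * (1 - (a * cnj a + b * cnj b)) / of_real \<Delta> - 1"
proof -
  define Dc where "Dc = complex_of_real \<Delta>"
  have Dc0: "Dc \<noteq> 0" using D0 Dc_def by simp
  have Dce: "Dc = 1 - (a * cnj a + b * cnj b + c * cnj c + d * cnj d) + (a * d - b * c) * cnj (a * d - b * c)"
    unfolding Dc_def \<Delta>_def by (simp only: of_real_add of_real_diff of_real_1 complex_norm_square)
  have detN: "(1 - (cnj a * a + cnj c * c)) * (1 - (cnj b * b + cnj d * d)) - (- (cnj a * b + cnj c * d)) * (- (cnj b * a + cnj d * c)) = Dc"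
    unfolding Dce by simp algebra
  have detM: "(1 - (a * cnj a + b * cnj b)) * (1 - (c * cnj c + d * cnj d)) - (- (a * cnj c + b * cnj d)) * (- (c * cnj a + d * cnj b)) = Dc"
    unfolding Dce by simp algebra
  have N: "mat 1 - adj (mk a b c d) ** mk a b c d = mk (1 - (cnj a * a + cnj c * c)) (- (cnj a * b + cnj c * d)) (- (cnj b * a + cnj d * c)) (1 - (cnj b * b + cnj d * d))"
    by (simp add: adj_mk mk_mult mat1_mk mk_diff)
  have M: "mat 1 - mk a b c d ** adj (mk a b c d) = mk (1 - (a * cnj a + b * cnj b)) (- (a * cnj c + b * cnj d)) (- (c * cnj a + d * cnj b)) (1 - (c * cnj c + d * cnj d))"
    by (simp add: adj_mk mk_mult mat1_mk mk_diff)
  have Ni: "matrix_inv (mat 1 - adj (mk a b c d) ** mk a b c d) =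
     mk ((1 - (cnj b * b + cnj d * d)) / Dc) ((cnj a * b + cnj c * d) / Dc) ((cnj b * a + cnj d * c) / Dc) ((1 - (cnj a * a + cnj c * c)) / Dc)"
    unfolding N by (subst matrix_inv_mk) (simp_all only: detN Dc0 minus_minus not_False_eq_True)
  have Mi: "matrix_inv (mat 1 - mk a b c d ** adj (mk a b c d)) =
     mk ((1 - (c * cnj c + d * cnj d)) / Dc) ((a * cnj c + b * cnj d) / Dc) ((c * cnj a + d * cnj b) / Dc) ((1 - (a * cnj a + b * cnj b)) / Dc)"
    unfolding M by (subst matrix_inv_mk) (simp_all only: detM Dc0 minus_minus not_False_eq_True)
  have K: "KZ (mk a b c d) \<rho> = mk
      (((mat 1 - \<rho>\<^sup>2 *\<^sub>R (adj (mk a b c d) ** mk a b c d)) ** matrix_inv (mat 1 - adj (mk a b c d) ** mk a b c d)) $ 1 $ 1)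
      ((((1 - \<rho>\<^sup>2) *\<^sub>R matrix_inv (mat 1 - mk a b c d ** adj (mk a b c d))) ** mk a b c d) $ 2 $ 1)
      ((((1 - \<rho>\<^sup>2) *\<^sub>R adj (mk a b c d)) ** matrix_inv (mat 1 - mk a b c d ** adj (mk a b c d))) $ 1 $ 2)
      (((mk a b c d ** adj (mk a b c d) - \<rho>\<^sup>2 *\<^sub>R mat 1) ** matrix_inv (mat 1 - mk a b c d ** adj (mk a b c d))) $ 2 $ 2)"
    unfolding KZ_def Let_def by (simp add: mk_eq_iff)
  have dd: "Dc = (1 - (cnj a * a + cnj c * c)) * (1 - (cnj b * b + cnj d * d)) - (cnj a * b + cnj c * d) * (cnj b * a + cnj d * c)"
    using detN by (simp add: algebra_simps)
  show "KZ (mk a b c d) \<rho> $ 1 $ 1 = of_real (\<rho>^2) + of_real (1 - \<rho>^2) * (1 - (cnj b * b + cnj d * d)) / of_real \<Delta>"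
    unfolding K Ni Dc_def[symmetric]
    apply (simp add: adj_mk mk_mult mat1_mk mk_diff mk_scaleR)
    apply (simp add: field_simps Dc0)
    apply (insert dd) by algebra
  show "KZ (mk a b c d) \<rho> $ 1 $ 2 = of_real (1 - \<rho>^2) * (c + cnj b * (a * d - b * c)) / of_real \<Delta>"
    unfolding K Mi Dc_def[symmetric]
    apply (simp add: adj_mk mk_mult mat1_mk mk_diff mk_scaleR)
    apply (simp add: field_simps Dc0)
    done
  show "KZ (mk a b c d) \<rho> $ 2 $ 1 = of_real (1 - \<rho>^2) * (cnj c + b * cnj (a * d - b * c)) / of_real \<Delta>"
    unfolding K Mi Dc_def[symmetric]
    apply (simp add: adj_mk mk_mult mat1_mk mk_diff mk_scaleR)
    apply (simp add: field_simps Dc0)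
    done
  show "KZ (mk a b c d) \<rho> $ 2 $ 2 = of_real (1 - \<rho>^2) * (1 - (a * cnj a + b * cnj b)) / of_real \<Delta> - 1"
    unfolding K Mi Dc_def[symmetric]
    apply (simp add: adj_mk mk_mult mat1_mk mk_diff mk_scaleR)
    apply (simp add: field_simps Dc0)
    apply (insert dd) by algebra
qed


lemma cn: "cnj z * z = complex_of_real ((cmod z)^2)" "z * cnj z = complex_of_real ((cmod z)^2)"
  by (metis complex_norm_square mult.commute)+

lemma keyid:
  fixes a b c d :: complex
  shows "(1 - (cmod b)^2 - (cmod d)^2) * (1 - (cmod a)^2 - (cmod b)^2) - (cmod (c + cnj b * (a * d - b * c)))^2
     = (1 - ((cmod a)^2 + (cmod b)^2 + (cmod c)^2 + (cmod d)^2) + (cmod (a * d - b * c))^2) * (1 - (cmod b)^2)"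
proof -
  have "complex_of_real ((1 - (cmod b)^2 - (cmod d)^2) * (1 - (cmod a)^2 - (cmod b)^2) - (cmod (c + cnj b * (a * d - b * c)))^2)
     = complex_of_real ((1 - ((cmod a)^2 + (cmod b)^2 + (cmod c)^2 + (cmod d)^2) + (cmod (a * d - b * c))^2) * (1 - (cmod b)^2))"
    by (simp only: of_real_mult of_real_diff of_real_add of_real_1 complex_norm_square) (simp, algebra)
  then show ?thesis by (simp only: of_real_eq_iff)
qed

lemma not_pd:
  fixes a b c d :: complex and \<rho> :: real
  defines "\<Delta> \<equiv> 1 - ((cmod a)^2 + (cmod b)^2 + (cmod c)^2 + (cmod d)^2) + (cmod (a * d - b * c))^2"
  assumes D0: "\<Delta> > 0" and r0: "0 \<le> \<rho>" and r1: "\<rho> < 1" and da: "(cmod d)^2 \<le> \<rho>^2 * (cmod a)^2"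
  shows "\<not> pos_def (KZ (mk a b c d) \<rho>)"
proof
  assume pd: "pos_def (KZ (mk a b c d) \<rho>)"
  define K where "K = KZ (mk a b c d) \<rho>"
  define s where "s = 1 - \<rho>^2"
  define P where "P = 1 - (cmod b)^2 - (cmod d)^2"
  define Q where "Q = 1 - (cmod a)^2 - (cmod b)^2"
  define k where "k = c + cnj b * (a * d - b * c)"
  define k11 where "k11 = \<rho>^2 + s * P / \<Delta>"
  define k22 where "k22 = s * Q / \<Delta> - 1"
  have s0: "s > 0" unfolding s_def using r0 r1 by (simp add: power_less_one_iff abs_square_less_1)
  have D0': "1 - ((cmod a)^2 + (cmod b)^2 + (cmod c)^2 + (cmod d)^2) + (cmod (a * d - b * c))^2 \<noteq> 0"
    using D0 unfolding \<Delta>_def by simp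
  note KK = KZ_mk[OF D0', of \<rho>, folded \<Delta>_def K_def]
  have K11: "K $ 1 $ 1 = of_real k11"
    unfolding KK k11_def by (simp add: cn P_def s_def)
  have K22: "K $ 2 $ 2 = of_real k22"
    unfolding KK k22_def by (simp add: cn Q_def s_def)
  have K12: "K $ 1 $ 2 = of_real (s / \<Delta>) * k"
    unfolding KK k_def by (simp add: s_def)
  have K21: "K $ 2 $ 1 = of_real (s / \<Delta>) * cnj k"
    unfolding KK k_def by (simp add: s_def)
  have kk: "(cmod k)^2 = P * Q - \<Delta> * (1 - (cmod b)^2)"
    using keyid[of b d a c] unfolding P_def Q_def k_def \<Delta>_def by linarith
  have det_eq: "k11 * k22 - (s / \<Delta>)^2 * (cmod k)^2 = (s * ((cmod d)^2 - \<rho>^2 * (cmod a)^2) - \<rho>^2 * \<Delta>) / \<Delta>"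
    unfolding k11_def k22_def kk using D0
    by (simp add: field_simps power2_eq_square s_def P_def Q_def)
  have det_le: "k11 * k22 - (s / \<Delta>)^2 * (cmod k)^2 \<le> 0"
  proof -
    have "s * ((cmod d)^2 - \<rho>^2 * (cmod a)^2) \<le> 0" using s0 da by (simp add: mult_nonneg_nonpos)
    moreover have "\<rho>^2 * \<Delta> \<ge> 0" using D0 by simp
    ultimately have "s * ((cmod d)^2 - \<rho>^2 * (cmod a)^2) - \<rho>^2 * \<Delta> \<le> 0" by linarith
    then show ?thesis unfolding det_eq using D0 by (simp add: divide_nonpos_pos)
  qed
  define v1 :: "complex^2" where "v1 = (\<chi> i. if i = 1 then 1 else 0)"
  have v1: "v1 \<noteq> 0" "v1 $ 1 = 1" "v1 $ 2 = 0" by (auto simp: v1_def vec_eq_iff)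
  have "Re (\<Sum>i\<in>UNIV. \<Sum>j\<in>UNIV. cnj (v1 $ i) * K $ i $ j * v1 $ j) > 0"
    using pd v1(1) unfolding pos_def_def K_def Let_def by blast
  then have k11p: "k11 > 0" by (simp add: sum_2 v1 K11)
  define v2 :: "complex^2" where "v2 = (\<chi> i. if i = 1 then - K $ 1 $ 2 else K $ 1 $ 1)"
  have v2: "v2 $ 1 = - K $ 1 $ 2" "v2 $ 2 = K $ 1 $ 1" by (simp_all add: v2_def)
  have "v2 $ 2 \<noteq> 0" using k11p v2(2) K11 by simp
  then have "v2 \<noteq> 0" by auto
  then have "Re (\<Sum>i\<in>UNIV. \<Sum>j\<in>UNIV. cnj (v2 $ i) * K $ i $ j * v2 $ j) > 0"
    using pd unfolding pos_def_def K_def Let_def by blast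
  moreover have "(\<Sum>i\<in>UNIV. \<Sum>j\<in>UNIV. cnj (v2 $ i) * K $ i $ j * v2 $ j)
      = of_real (k11 * (k11 * k22 - (s / \<Delta>)^2 * (cmod k)^2))"
  proof -
    have "(\<Sum>i\<in>UNIV. \<Sum>j\<in>UNIV. cnj (v2 $ i) * K $ i $ j * v2 $ j)
       = of_real k11 * (of_real k11 * of_real k22 - of_real (s / \<Delta>) * of_real (s / \<Delta>) * (k * cnj k))"
      by (simp add: sum_2 v2 K11 K12 K21 K22) (simp add: algebra_simps)
    also have "\<dots> = of_real (k11 * (k11 * k22 - (s / \<Delta>)^2 * (cmod k)^2))"
      by (simp add: cn power2_eq_square)
    finally show ?thesis .
  qed
  ultimately have "k11 * (k11 * k22 - (s / \<Delta>)^2 * (cmod k)^2) > 0" by simp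
  moreover have "k11 * (k11 * k22 - (s / \<Delta>)^2 * (cmod k)^2) \<le> 0"
    using k11p det_le by (simp add: mult_nonneg_nonpos)
  ultimately show False by simp
qed


theorem mainTheorem16:
  fixes l0 y1 y2 q w :: complex and th1 th2 :: real
  assumes "cmod l0 < 1" and "l0 \<noteq> 0"
    and "(y1, y2, q) \<in> G3t"
    and "y1 * y2 \<noteq> 9 * q"
    and "cmod y2 \<le> cmod y1"
    and "Phi1_Hinf (y1, y2, q) < cmod l0"
    and "w^2 = (y1 * y2 - 9 * q) / (9 * l0)"
    and "th1 \<noteq> 0" and "th2 \<noteq> 0" and "th1 \<noteq> th2"
    and "\<And>th. th \<in> {th1, th2} \<Longrightarrow> th + 1 / th =
           cmod l0 / cmod (y1 * y2 - 9 * q) *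
           (9 - (cmod y1)^2 / (cmod l0)^2 - (cmod y2)^2 + 9 * (cmod q)^2 / (cmod l0)^2)"
  shows "\<forall>nu::real. nu > 0 \<and> th1 < nu^2 \<and> nu^2 < th2 \<longrightarrow>
           (let Z = (\<chi> i j. if i = 1 \<and> j = 1 then y1 / (3 * l0)
                            else if i = 1 \<and> j = 2 then complex_of_real nu * w
                            else if i = 2 \<and> j = 1 then w / complex_of_real nu
                            else y2 / 3) :: cmat2
            in opnorm Z < 1 \<and> \<not> pos_def (KZ Z (cmod l0)))"
proof (intro allI impI)
  fix nu :: real
  assume nu: "nu > 0 \<and> th1 < nu^2 \<and> nu^2 < th2"
  define L where "L = cmod l0"
  define E where "E = y1 * y2 - 9 * q"
  define C where "C = L / cmod E * (9 - (cmod y1)^2 / L^2 - (cmod y2)^2 + 9 * (cmod q)^2 / L^2)"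
  define x where "x = nu^2"
  have L0: "L > 0" "L < 1" using assms(1,2) L_def by auto
  have E0: "cmod E > 0" using assms(4) E_def by simp
  have x0: "x > 0" using nu x_def by simp
  obtain b1 b2 q' where g: "(y1, y2, q) = (b1 + cnj b2 * q', b2 + cnj b1 * q', q')"
      "cmod q' < 1" "cmod b1 + cmod b2 < 3"
    using assms(3) unfolding G3t_def by blast
  have q1: "cmod q < 1" using g by simp
  have y23: "cmod y2 < 3"
  proof -
    have "y2 = b2 + cnj b1 * q" using g by simp
    then have "cmod y2 \<le> cmod b2 + cmod b1 * cmod q"
      by (metis complex_mod_cnj norm_mult norm_triangle_ineq)
    also have "\<dots> \<le> cmod b2 + cmod b1" using q1 by (simp add: mult_left_le)
    finally show ?thesis using g(3) by simp
  qed
  have qL: "cmod q < L"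
    using phi_bound[OF y23 q1 assms(5) assms(4)] assms(6) L_def by simp
  have t1: "th1 + 1 / th1 = C" and t2: "th2 + 1 / th2 = C"
    using assms(11)[of th1] assms(11)[of th2] unfolding C_def L_def E_def by auto
  have prod: "th1 * th2 = 1"
  proof -
    have h1: "1 + th1 * th1 = C * th1" using t1 assms(8) by (simp add: field_simps)
    have h2: "1 + th2 * th2 = C * th2" using t2 assms(9) by (simp add: field_simps)
    have "th2 * (1 + th1 * th1) = th1 * (1 + th2 * th2)" using h1 h2 by simp
    then have "(th1 - th2) * (th1 * th2 - 1) = 0" by (simp add: algebra_simps)
    then show ?thesis using assms(10) by simp
  qed
  have xC: "x + 1 / x < C"
  proof -
    have "(x - th1) * (x - th2) < 0" using nu x_def by (simp add: mult_pos_neg)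
    then have "x * x - (th1 + th2) * x + 1 < 0" using prod by (simp add: algebra_simps)
    moreover have "th1 + th2 = C"
    proof -
      have "th2 = 1 / th1" using prod assms(8) by (simp add: field_simps)
      then show ?thesis using t1 by simp
    qed
    ultimately have "x * x + 1 < C * x" by simp
    then show ?thesis using x0 by (simp add: field_simps)
  qed
  define a where "a = y1 / (3 * l0)"
  define b where "b = complex_of_real nu * w"
  define c where "c = w / complex_of_real nu"
  define d where "d = y2 / 3"
  have Zeq: "(\<chi> i j. if i = 1 \<and> j = 1 then y1 / (3 * l0)
                            else if i = 1 \<and> j = 2 then complex_of_real nu * w
                            else if i = 2 \<and> j = 1 then w / complex_of_real nu
                            else y2 / 3) = mk a b c d"
    unfolding mk_def a_def b_def c_def d_def ..
  have det: "a * d - b * c = q / l0"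
    unfolding a_def b_def c_def d_def using nu assms(2)
    by (simp add: field_simps power2_eq_square[symmetric] assms(7))
  have w2: "(cmod w)^2 = cmod E / (9 * L)"
    using arg_cong[OF assms(7), of cmod] unfolding E_def L_def by (simp add: norm_power norm_divide norm_mult)
  have bc: "(cmod b)^2 + (cmod c)^2 = (cmod w)^2 * (x + 1 / x)"
    unfolding b_def c_def x_def using nu by (simp add: norm_mult norm_divide power_mult_distrib power_divide field_simps)
  have ad: "(cmod a)^2 = (cmod y1)^2 / (9 * L^2)" "(cmod d)^2 = (cmod y2)^2 / 9"
    unfolding a_def d_def L_def by (simp_all add: norm_divide norm_mult power_divide power_mult_distrib)
  have D: "(cmod (a * d - b * c))^2 = (cmod q)^2 / L^2"
    unfolding det L_def by (simp add: norm_divide power_divide)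
  have wx: "(cmod w)^2 * (x + 1 / x) < (cmod w)^2 * C"
  proof -
    have "(cmod w)^2 > 0" using w2 E0 L0 by simp
    then show ?thesis using xC by simp
  qed
  have wC: "(cmod w)^2 * C = (9 - (cmod y1)^2 / L^2 - (cmod y2)^2 + 9 * (cmod q)^2 / L^2) / 9"
    unfolding w2 C_def using E0 L0 by (simp add: field_simps)
  have Dpos: "1 - ((cmod a)^2 + (cmod b)^2 + (cmod c)^2 + (cmod d)^2) + (cmod (a * d - b * c))^2 > 0"
  proof -
    have "(cmod a)^2 + (cmod b)^2 + (cmod c)^2 + (cmod d)^2 = (cmod y1)^2 / (9 * L^2) + (cmod w)^2 * (x + 1 / x) + (cmod y2)^2 / 9"
      using ad bc by simp
    also have "\<dots> < (cmod y1)^2 / (9 * L^2) + (9 - (cmod y1)^2 / L^2 - (cmod y2)^2 + 9 * (cmod q)^2 / L^2) / 9 + (cmod y2)^2 / 9"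
      using wx wC by simp
    also have "\<dots> = 1 + (cmod q)^2 / L^2" using L0 by (simp add: field_simps)
    finally show ?thesis unfolding D by simp
  qed
  have D1: "(cmod (a * d - b * c))^2 < 1"
    unfolding D using qL L0 by (simp add: power_strict_mono divide_less_eq)
  have op: "opnorm (mk a b c d) < 1"
    using opnorm_lt[of a b c d] Dpos D1 by simp
  have da: "(cmod d)^2 \<le> L^2 * (cmod a)^2"
    unfolding ad using L0 assms(5) by (simp add: power_mono)
  have npd: "\<not> pos_def (KZ (mk a b c d) L)"
    by (rule not_pd[OF Dpos _ _ da]) (use L0 in auto)
  show "let Z = (\<chi> i j. if i = 1 \<and> j = 1 then y1 / (3 * l0)
                            else if i = 1 \<and> j = 2 then complex_of_real nu * w
                            else if i = 2 \<and> j = 1 then w / complex_of_real nu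
                            else y2 / 3) :: cmat2
            in opnorm Z < 1 \<and> \<not> pos_def (KZ Z (cmod l0))"
    unfolding Zeq Let_def L_def[symmetric] using op npd by simp
qed

end
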